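(* Let $p$ be a prime and $m,n\in\mathbb{Z}$. Then ($n=m^2$, $p\nmid m$ and $p\nmid n$) if and only if $p\nmid m$, $p\nmid n$, and there exists $a\in\{\pm p^h: h\geq 1\}$ such that $m\mid a^2-1$, $n\mid a^2-1$ and $(a^8-m)\mid(a^{16}-n)$. Consequently, the collection of sets $\{(n,n^2): n\in\mathbb{Z},\ p\nmid n\}$, $p$ prime, is uniformly positive existentially definable in the class $\mathcal{D}=\{\mathfrak{D}_p: p\text{ prime}\}$ over the language $\{0,1,+,\mid,R,T\}$.
   Context: Divisibility $\mid$ is ordinary divisibility in $\mathbb{Z}$. For a prime $p$, $x\mid_p y$ means $y=\pm xp^s$ for some $s\in\mathbb{Z}$. $\mathfrak{D}_p=(\mathbb{Z};0,1,+,\mid,\mid_p,\mathbb{Z}\smallsetminus\{-1,0,1\})$, with $R$ interpreted as $\mid_p$ and $T$ as $\mathbb{Z}\smallsetminus\{-1,0,1\}$. Uniformly positive existentially definable means a single positive existential formula of the language defines the corresponding set in every $\mathfrak{D}_p$. *)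

theory Defs
  imports Complex_Main "HOL-Computational_Algebra.Primes"
begin

definition pdvd :: "int \<Rightarrow> int \<Rightarrow> int \<Rightarrow> bool" where
  "pdvd p x y \<longleftrightarrow> (\<exists>s::int. real_of_int y = real_of_int x * real_of_int p powi s
                               \<or> real_of_int y = - (real_of_int x * real_of_int p powi s))"

datatype tm = Var nat | Zero | One | Plus tm tm

datatype pefm = Eq tm tm | Dvd tm tm | Rel tm tm | Tpred tm
  | Conj pefm pefm | Disj pefm pefm | Ex nat pefm

primrec tval :: "(nat \<Rightarrow> int) \<Rightarrow> tm \<Rightarrow> int" where
  "tval e (Var i) = e i"
| "tval e Zero = 0"
| "tval e One = 1"
| "tval e (Plus s t) = tval e s + tval e t"

text \<open>Satisfaction in D_p: R is |_p, T is Z minus {-1,0,1}.\<close>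
primrec sat :: "int \<Rightarrow> (nat \<Rightarrow> int) \<Rightarrow> pefm \<Rightarrow> bool" where
  "sat p e (Eq s t) = (tval e s = tval e t)"
| "sat p e (Dvd s t) = (tval e s dvd tval e t)"
| "sat p e (Rel s t) = pdvd p (tval e s) (tval e t)"
| "sat p e (Tpred t) = (tval e t \<notin> {-1, 0, 1})"
| "sat p e (Conj f g) = (sat p e f \<and> sat p e g)"
| "sat p e (Disj f g) = (sat p e f \<or> sat p e g)"
| "sat p e (Ex i f) = (\<exists>v. sat p (e(i := v)) f)"

text \<open>A family of binary relations S p (p prime) is uniformly positive existentially
  definable: one formula with free variables among 0,1 defines S p in every D_p.\<close>
definition unif_pe_definable2 :: "(int \<Rightarrow> (int \<times> int) set) \<Rightarrow> bool" where
  "unif_pe_definable2 S \<longleftrightarrow> (\<exists>\<phi>. \<forall>p. prime p \<longrightarrow>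
      (\<forall>e. sat p e \<phi> \<longleftrightarrow> (e 0, e 1) \<in> S p))"

end

theory Submission
  imports Defs "HOL-Number_Theory.Number_Theory"
begin


lemma euler_int:
  fixes p m :: int
  assumes "prime p" "\<not> p dvd m"
  shows "\<exists>t::nat. t \<ge> 1 \<and> m^2 dvd p^t - 1"
proof -
  have m0: "m \<noteq> 0" using assms by auto
  define M where "M = nat (m^2)"
  define P where "P = nat p"
  have p0: "p > 0" using assms prime_gt_0_int by blast
  have Mpos: "M > 0" using m0 by (simp add: M_def)
  have cop: "coprime p (m^2)" using assms
    by (simp add: prime_imp_coprime)
  have copn: "coprime P M" using cop p0 by (simp add: P_def M_def coprime_int_iff[symmetric])
  have "[P ^ totient M = 1] (mod M)" using euler_theorem[OF copn] .
  hence "[int (P ^ totient M) = int 1] (mod int M)" using cong_int_iff by blast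
  hence "[p ^ totient M = 1] (mod m^2)" using p0 by (simp add: P_def M_def)
  hence "m^2 dvd p ^ totient M - 1" by (simp add: cong_iff_dvd_diff dvd_diff_commute)
  moreover have "totient M \<ge> 1" using Mpos by (simp add: Suc_le_eq)
  ultimately show ?thesis by blast
qed

lemma pdvd_intro:
  fixes p x :: int
  shows "pdvd p x (x * p^k)" "pdvd p x (-(x * p^k))"
  unfolding pdvd_def
  by (rule exI[of _ "int k"], simp)+

lemma pdvd_dest:
  fixes p x y :: int
  assumes "prime p" "\<not> p dvd x" "pdvd p x y"
  shows "\<exists>k::nat. y = x * p^k \<or> y = -(x * p^k)"
proof -
  have p0: "p > 1" using assms prime_gt_1_int by blast
  obtain s where s: "real_of_int y = real_of_int x * real_of_int p powi s
                    \<or> real_of_int y = - (real_of_int x * real_of_int p powi s)"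
    using assms(3) unfolding pdvd_def by blast
  show ?thesis
  proof (cases "s \<ge> 0")
    case True
    then obtain k where k: "s = int k" using nonneg_eq_int by blast
    have "real_of_int y = real_of_int (x * p^k) \<or> real_of_int y = real_of_int (-(x*p^k))"
      using s k by simp
    hence "y = x * p^k \<or> y = -(x * p^k)" using of_int_eq_iff by blast
    thus ?thesis by blast
  next
    case False
    obtain k where k0: "- s = int k" using nonneg_eq_int[of "-s"] False by fastforce
    hence k: "s = - int k" "k \<ge> 1" using False by linarith+
    have pk: "real_of_int p ^ k \<noteq> 0" using p0 by simp
    have "real_of_int p powi s = inverse (real_of_int p ^ k)"
      using k by (simp add: power_int_minus)
    hence "real_of_int y * real_of_int p ^ k = real_of_int x
          \<or> real_of_int y * real_of_int p ^ k = - real_of_int x"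
      using s pk by (auto simp: field_simps)
    hence "y * p^k = x \<or> y * p^k = - x"
      by (metis of_int_eq_iff of_int_minus of_int_mult of_int_power)
    hence "p^k dvd x" by (metis dvd_minus_iff dvd_triv_right)
    moreover have "p dvd p^k" using k by (simp add: dvd_power)
    ultimately have "p dvd x" using dvd_trans by blast
    thus ?thesis using assms by blast
  qed
qed



definition SQ :: "int \<Rightarrow> int \<Rightarrow> int \<Rightarrow> bool" where
  "SQ p a c \<longleftrightarrow> a dvd c \<and> pdvd p 1 c \<and> pdvd p (a-1) (c-a) \<and> pdvd p (a+1) (c+a)"

lemma unitlike:
  fixes p y :: int
  assumes "prime p" "y dvd p^j" "\<not> p dvd y"
  shows "y = 1 \<or> y = -1"
proof -
  have "coprime y p" using assms by (simp add: prime_imp_coprime ac_simps)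
  hence "coprime y (p^j)" by simp
  hence "\<bar>y\<bar> = 1" using assms(2) coprime_common_divisor_int[of y "p^j" y] by simp
  thus ?thesis by linarith
qed

lemma core:
  fixes p a x t r :: int
  assumes "prime p" "p dvd a"
    and "p dvd x \<or> x = 1 \<or> x = -1"
    and "p dvd t \<or> t = 1 \<or> t = -1"
    and "p dvd r \<or> r = 1 \<or> r = -1"
    and "x - 1 = (a-1)*t \<or> x - 1 = -((a-1)*t)"
    and "x + 1 = (a+1)*r \<or> x + 1 = -((a+1)*r)"
    and "t \<noteq> 0" "r \<noteq> 0"
  shows "x = a"
proof -
  have np1: "\<not> p dvd 1" using assms(1) by (simp add: prime_int_iff)
  have a1: "a \<noteq> 1" "a \<noteq> -1" using assms(1,2) np1 by auto
  show ?thesis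
  proof (cases "p dvd x")
    case True
    have "\<not> p dvd t"
    proof
      assume "p dvd t"
      hence "p dvd x - 1" using assms(6) by auto
      with True have "p dvd x - (x - 1)" using dvd_diff by blast
      thus False using np1 by simp
    qed
    hence t: "t = 1 \<or> t = -1" using assms(4) by blast
    have "\<not> p dvd r"
    proof
      assume "p dvd r"
      hence "p dvd x + 1" using assms(7) by auto
      with True have "p dvd (x + 1) - x" using dvd_diff by blast
      thus False using np1 by simp
    qed
    hence r: "r = 1 \<or> r = -1" using assms(5) by blast
    show ?thesis using t r assms(6,7) a1 by auto
  next
    case False
    hence "x = 1 \<or> x = -1" using assms(3) by blast
    thus ?thesis using assms(6,7,8,9) a1 by auto
  qed
qed

lemma sq_back:
  fixes p a c :: int
  assumes p: "prime p" and pa: "p dvd a" and a0: "a \<noteq> 0" and sq: "SQ p a c"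
  shows "c = a^2"
proof -
  have np1: "\<not> p dvd 1" using p by (simp add: prime_int_iff)
  from sq have ac: "a dvd c" and r1: "pdvd p 1 c" and r2: "pdvd p (a-1) (c-a)"
    and r3: "pdvd p (a+1) (c+a)" by (auto simp: SQ_def)
  obtain j where cj: "c = p^j \<or> c = -(p^j)" using pdvd_dest[OF p np1 r1] by auto
  obtain x where cx: "c = a * x" using ac by blast
  have "x dvd p^j" using cj cx by (metis dvd_minus_iff dvd_triv_right)
  hence xx: "p dvd x \<or> x = 1 \<or> x = -1" using unitlike[OF p] by blast
  have na1: "\<not> p dvd (a - 1)"
  proof
    assume "p dvd a - 1" hence "p dvd a - (a - 1)" using pa dvd_diff by blast
    thus False using np1 by simp
  qed
  have na2: "\<not> p dvd (a + 1)"
  proof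
    assume "p dvd a + 1" hence "p dvd (a + 1) - a" using pa dvd_diff by blast
    thus False using np1 by simp
  qed
  obtain i where ci: "c - a = (a-1)*p^i \<or> c - a = -((a-1)*p^i)"
    using pdvd_dest[OF p na1 r2] by auto
  obtain l where cl: "c + a = (a+1)*p^l \<or> c + a = -((a+1)*p^l)"
    using pdvd_dest[OF p na2 r3] by auto
  have cop1: "coprime a (a - 1)"
    by simp
  have cop2: "coprime a (a + 1)"
    by (simp add: coprime_commute)
  have "a dvd (a-1)*p^i"
  proof -
    have "a dvd c - a" using ac by simp
    thus ?thesis using ci by (metis dvd_minus_iff)
  qed
  hence "a dvd p^i" using cop1 coprime_dvd_mult_right_iff by blast
  then obtain t where t: "p^i = a * t" by blast
  have "a dvd (a+1)*p^l"
  proof -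
    have "a dvd c + a" using ac by simp
    thus ?thesis using cl by (metis dvd_minus_iff)
  qed
  hence "a dvd p^l" using cop2 coprime_dvd_mult_right_iff by blast
  then obtain r where r: "p^l = a * r" by blast
  have p0: "p \<noteq> 0" using p by auto
  have t0: "t \<noteq> 0" using t p0 by auto
  have r0: "r \<noteq> 0" using r p0 by auto
  have "t dvd p^i" using t by simp
  hence tt: "p dvd t \<or> t = 1 \<or> t = -1" using unitlike[OF p] by blast
  have "r dvd p^l" using r by simp
  hence rr: "p dvd r \<or> r = 1 \<or> r = -1" using unitlike[OF p] by blast
  have "a * (x - 1) = a * ((a-1)*t) \<or> a * (x - 1) = a * (-((a-1)*t))"
    using ci cx t by (auto simp: algebra_simps)
  hence e1: "x - 1 = (a-1)*t \<or> x - 1 = -((a-1)*t)" using a0 mult_left_cancel by meson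
  have "a * (x + 1) = a * ((a+1)*r) \<or> a * (x + 1) = a * (-((a+1)*r))"
    using cl cx r by (auto simp: algebra_simps)
  hence e2: "x + 1 = (a+1)*r \<or> x + 1 = -((a+1)*r)" using a0 mult_left_cancel by meson
  have "x = a" using core[OF p pa xx tt rr e1 e2 t0 r0] .
  thus ?thesis using cx by (simp add: power2_eq_square)
qed

lemma sq_fwd:
  fixes p a :: int
  assumes "a = p^h \<or> a = -(p^h)"
  shows "SQ p a (a^2)"
proof -
  have "a^2 = 1 * p^(2*h)" using assms by (auto simp: power_mult power2_eq_square power_mult_distrib)
  hence 1: "pdvd p 1 (a^2)" using pdvd_intro(1)[where x=1 and p=p and k="2*h"] by simp
  have "a^2 - a = (a-1)*p^h \<or> a^2 - a = -((a-1)*p^h)" using assms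
    by (auto simp: power2_eq_square algebra_simps)
  hence 2: "pdvd p (a-1) (a^2-a)" using pdvd_intro by metis
  have "a^2 + a = (a+1)*p^h \<or> a^2 + a = -((a+1)*p^h)" using assms
    by (auto simp: power2_eq_square algebra_simps)
  hence 3: "pdvd p (a+1) (a^2+a)" using pdvd_intro by metis
  show ?thesis using 1 2 3 by (simp add: SQ_def power2_eq_square)
qed



lemma size_conclude:
  fixes K E m n :: int
  assumes "\<bar>m\<bar> \<le> K" "\<bar>n\<bar> \<le> K" "\<bar>E\<bar> > K^2 + 2*K" "(E - m) dvd (E^2 - n)"
  shows "n = m^2"
proof (rule ccontr)
  assume ne: "n \<noteq> m^2"
  have "(E - m) dvd (E^2 - m^2)"
    by (metis dvd_triv_left power2_eq_square square_diff_square_factored mult.commute)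
  hence "(E - m) dvd (E^2 - n) - (E^2 - m^2)" using assms(4) dvd_diff by blast
  hence d: "(E - m) dvd (m^2 - n)" by simp
  have "m^2 - n \<noteq> 0" using ne by simp
  hence le: "\<bar>E - m\<bar> \<le> \<bar>m^2 - n\<bar>" using d dvd_imp_le_int by blast
  have K0: "K \<ge> 0" using assms(1) by linarith
  have "m^2 \<le> K^2" using assms(1) by (metis abs_le_square_iff power2_abs abs_of_nonneg K0)
  moreover have "m^2 \<ge> 0" by simp
  ultimately have "\<bar>m^2 - n\<bar> \<le> K^2 + K" using assms(2) by (simp only: abs_le_iff) linarith
  moreover have "\<bar>E - m\<bar> \<ge> \<bar>E\<bar> - K" using assms(1) by linarith
  ultimately show False using le assms(3) by linarith
qed

definition Sqf :: "nat \<Rightarrow> nat \<Rightarrow> nat \<Rightarrow> nat \<Rightarrow> pefm" where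
  "Sqf a c u w = Conj (Eq (Plus (Var u) One) (Var a)) (Conj (Eq (Plus (Var w) (Var a)) (Var c))
     (Conj (Dvd (Var a) (Var c)) (Conj (Rel One (Var c)) (Conj (Rel (Var u) (Var w))
       (Rel (Plus (Var a) One) (Plus (Var c) (Var a)))))))"

lemma sat_Sqf: "sat p e (Sqf a c u w) \<longleftrightarrow>
   e u = e a - 1 \<and> e w = e c - e a \<and> SQ p (e a) (e c)"
  unfolding Sqf_def SQ_def by (auto simp: eq_diff_eq[symmetric])

fun exs :: "nat list \<Rightarrow> pefm \<Rightarrow> pefm" where
  "exs [] f = f"
| "exs (i # is) f = Ex i (exs is f)"

lemma sat_exs: "sat p e (exs is f) \<longleftrightarrow> (\<exists>g. (\<forall>j. j \<notin> set is \<longrightarrow> g j = e j) \<and> sat p g f)"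
proof (induction "is" arbitrary: e)
  case Nil
  then show ?case by (auto intro!: exI[of _ e])
next
  case (Cons i "is")
  show ?case
  proof
    assume "sat p e (exs (i # is) f)"
    then obtain v where "sat p (e(i := v)) (exs is f)" by auto
    then obtain g where "\<forall>j. j \<notin> set is \<longrightarrow> g j = (e(i:=v)) j" "sat p g f" using Cons by blast
    thus "\<exists>g. (\<forall>j. j \<notin> set (i # is) \<longrightarrow> g j = e j) \<and> sat p g f" by (intro exI[of _ g]) auto
  next
    assume "\<exists>g. (\<forall>j. j \<notin> set (i # is) \<longrightarrow> g j = e j) \<and> sat p g f"
    then obtain g where g: "\<forall>j. j \<notin> set (i # is) \<longrightarrow> g j = e j" "sat p g f" by blast
    have "\<forall>j. j \<notin> set is \<longrightarrow> g j = (e(i := g i)) j" using g(1) by auto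
    hence "sat p (e(i := g i)) (exs is f)" using Cons g(2) by blast
    thus "sat p e (exs (i # is) f)" by auto
  qed
qed

definition body :: pefm where
  "body = Conj (Rel One (Var 2)) (Conj (Tpred (Var 2)) (Conj (Sqf 2 3 6 7)
     (Conj (Dvd (Var 0) (Var 6)) (Conj (Dvd (Var 1) (Var 6)) (Conj (Sqf 3 4 8 9)
     (Conj (Sqf 4 5 10 11) (Conj (Eq (Plus (Var 12) (Var 0)) (Var 4))
     (Conj (Eq (Plus (Var 13) (Var 1)) (Var 5)) (Dvd (Var 12) (Var 13))))))))))"

lemma sat_body: "sat p g body \<longleftrightarrow>
   pdvd p 1 (g 2) \<and> g 2 \<notin> {-1,0,1} \<and> g 6 = g 2 - 1 \<and> g 7 = g 3 - g 2 \<and> SQ p (g 2) (g 3) \<and>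
   g 0 dvd g 2 - 1 \<and> g 1 dvd g 2 - 1 \<and> g 8 = g 3 - 1 \<and> g 9 = g 4 - g 3 \<and> SQ p (g 3) (g 4) \<and>
   g 10 = g 4 - 1 \<and> g 11 = g 5 - g 4 \<and> SQ p (g 4) (g 5) \<and> g 12 = g 4 - g 0 \<and> g 13 = g 5 - g 1 \<and>
   (g 4 - g 0) dvd (g 5 - g 1)"
  unfolding body_def by (simp add: sat_Sqf) (auto simp: eq_diff_eq[symmetric])

definition phi :: pefm where "phi = exs [2,3,4,5,6,7,8,9,10,11,12,13] body"



lemma pow_props:
  fixes p D :: int
  assumes p: "prime p" and r: "pdvd p 1 D" and T: "D \<notin> {-1,0,1}"
  shows "\<exists>i. i \<ge> 1 \<and> (D = p^i \<or> D = -(p^i))"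
proof -
  have np1: "\<not> p dvd 1" using p by (simp add: prime_int_iff)
  obtain i where i: "D = p^i \<or> D = -(p^i)" using pdvd_dest[OF p np1 r] by auto
  have "i \<noteq> 0"
  proof
    assume "i = 0" with i T show False by auto
  qed
  hence "i \<ge> 1" by simp
  thus ?thesis using i by blast
qed

lemma pow_ge:
  fixes p :: int
  assumes "prime p" "h \<ge> 1"
  shows "p^h \<ge> 2"
proof -
  have "p \<ge> 2" using assms prime_ge_2_int by blast
  hence "p^h \<ge> p^1" using assms(2) by (intro power_increasing) auto
  thus ?thesis using \<open>p \<ge> 2\<close> by simp
qed

lemma part1:
  fixes p m n :: int
  assumes p: "prime p"
  shows "(n = m^2 \<and> \<not> p dvd m \<and> \<not> p dvd n) \<longleftrightarrow>
             (\<not> p dvd m \<and> \<not> p dvd n \<and>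
              (\<exists>a \<in> {x. \<exists>h::nat. h \<ge> 1 \<and> (x = p^h \<or> x = - (p^h))}.
                  m dvd a^2 - 1 \<and> n dvd a^2 - 1 \<and> (a^8 - m) dvd (a^16 - n)))"
proof
  assume H: "n = m^2 \<and> \<not> p dvd m \<and> \<not> p dvd n"
  obtain t where t: "t \<ge> 1" "m^2 dvd p^t - 1" using euler_int[OF p] H by blast
  define a where "a = p^t"
  have a_in: "a \<in> {x. \<exists>h::nat. h \<ge> 1 \<and> (x = p^h \<or> x = - (p^h))}" using t a_def by auto
  have "a^2 - 1 = (a - 1) * (a + 1)" by (simp add: power2_eq_square algebra_simps)
  hence d2: "m^2 dvd a^2 - 1" using t(2) a_def by simp
  have d1: "m dvd a^2 - 1" using d2 by (metis dvd_trans dvd_triv_left power2_eq_square)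
  have "a^16 - n = (a^8 - m) * (a^8 + m)" using H by (simp add: power2_eq_square algebra_simps flip: power_add)
  hence d3: "(a^8 - m) dvd (a^16 - n)" by simp
  show "\<not> p dvd m \<and> \<not> p dvd n \<and>
              (\<exists>a \<in> {x. \<exists>h::nat. h \<ge> 1 \<and> (x = p^h \<or> x = - (p^h))}.
                  m dvd a^2 - 1 \<and> n dvd a^2 - 1 \<and> (a^8 - m) dvd (a^16 - n))"
    using H a_in d1 d2 d3 by blast
next
  assume H: "\<not> p dvd m \<and> \<not> p dvd n \<and>
              (\<exists>a \<in> {x. \<exists>h::nat. h \<ge> 1 \<and> (x = p^h \<or> x = - (p^h))}.
                  m dvd a^2 - 1 \<and> n dvd a^2 - 1 \<and> (a^8 - m) dvd (a^16 - n))"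
  then obtain a h where h: "h \<ge> 1" "a = p^h \<or> a = -(p^h)" and
     d: "m dvd a^2 - 1" "n dvd a^2 - 1" "(a^8 - m) dvd (a^16 - n)" by blast
  define A where "A = a^2"
  define q where "q = p^h"
  have Aq: "A = q * q" using h A_def q_def by (auto simp: power2_eq_square)
  have q2: "q \<ge> 2" using pow_ge[OF p h(1)] q_def by simp
  have "q * q \<ge> 2 * 2" using q2 by (intro mult_mono) auto
  hence A4: "A \<ge> 4" using Aq by simp
  have A10: "A - 1 \<noteq> 0" using A4 by simp
  have "\<bar>m\<bar> \<le> \<bar>A - 1\<bar>" using dvd_imp_le_int[OF A10] d(1) A_def by blast
  hence mK: "\<bar>m\<bar> \<le> A - 1" using A4 by simp
  have "\<bar>n\<bar> \<le> \<bar>A - 1\<bar>" using dvd_imp_le_int[OF A10] d(2) A_def by blast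
  hence nK: "\<bar>n\<bar> \<le> A - 1" using A4 by simp
  have e8: "a^8 = A^4" by (simp add: A_def flip: power_mult)
  have e16: "a^16 = (A^4)^2" by (simp add: A_def flip: power_mult)
  have big: "\<bar>A^4\<bar> > (A - 1)^2 + 2*(A - 1)"
  proof -
    have "A^4 = A^2 * A^2" by (simp flip: power_add)
    moreover have "A * A \<ge> 4 * 4" using A4 by (intro mult_mono) auto
    hence "A^2 \<ge> 16" by (simp add: power2_eq_square)
    ultimately have "A^4 \<ge> 16 * A^2" by (metis mult_right_mono zero_le_power2)
    moreover have "(A - 1)^2 + 2*(A - 1) = A^2 - 1" by (simp add: power2_eq_square algebra_simps)
    moreover have "A^2 \<ge> 0" by simp
    moreover have "\<bar>A^4\<bar> = A^4" by simp
    ultimately show ?thesis by linarith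
  qed
  have "n = m^2" using size_conclude[OF mK nK big] d(3) e8 e16 by simp
  thus "n = m^2 \<and> \<not> p dvd m \<and> \<not> p dvd n" using H by blast
qed



lemma def_part:
  fixes p :: int
  assumes p: "prime p"
  shows "sat p e phi \<longleftrightarrow> (e 0, e 1) \<in> {(n, n^2) | n. \<not> p dvd n}"
proof
  assume "sat p e phi"
  then obtain g where g: "\<forall>j. j \<notin> set [2,3,4,5,6,7,8,9,10,11,12,13::nat] \<longrightarrow> g j = e j" "sat p g body"
    unfolding phi_def sat_exs by blast
  have g0: "g 0 = e 0" and g1: "g 1 = e 1" using g(1) by auto
  define m where "m = e 0"
  define n where "n = e 1"
  define D where "D = g 2"
  define F where "F = g 3"
  define E where "E = g 4"
  define C where "C = g 5"
  have B: "pdvd p 1 D" "D \<notin> {-1,0,1}" "SQ p D F" "m dvd D - 1" "n dvd D - 1" "SQ p F E" "SQ p E C"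
     "(E - m) dvd (C - n)"
    using g(2) g0 g1 unfolding sat_body m_def n_def D_def F_def E_def C_def by auto
  obtain i where i: "i \<ge> 1" "D = p^i \<or> D = -(p^i)" using pow_props[OF p B(1,2)] by blast
  have pD: "p dvd D" using i by (auto simp: dvd_power)
  have D0: "D \<noteq> 0" using B(2) by auto
  have F: "F = D^2" using sq_back[OF p pD D0 B(3)] .
  have pF: "p dvd F" using pD F by (simp add: power2_eq_square)
  have F0: "F \<noteq> 0" using D0 F by simp
  have E: "E = F^2" using sq_back[OF p pF F0 B(6)] .
  have pE: "p dvd E" using pF E by (simp add: power2_eq_square)
  have E0: "E \<noteq> 0" using F0 E by simp
  have C: "C = E^2" using sq_back[OF p pE E0 B(7)] .
  have np1: "\<not> p dvd 1" using p by (simp add: prime_int_iff)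
  have pm: "\<not> p dvd m"
  proof
    assume "p dvd m" hence "p dvd D - 1" using B(4) dvd_trans by blast
    hence "p dvd D - (D - 1)" using pD dvd_diff by blast
    thus False using np1 by simp
  qed
  have D10: "D - 1 \<noteq> 0" using B(2) by auto
  define K where "K = \<bar>D\<bar> + 1"
  have "\<bar>m\<bar> \<le> \<bar>D - 1\<bar>" using dvd_imp_le_int[OF D10 B(4)] .
  hence mK: "\<bar>m\<bar> \<le> K" unfolding K_def by linarith
  have "\<bar>n\<bar> \<le> \<bar>D - 1\<bar>" using dvd_imp_le_int[OF D10 B(5)] .
  hence nK: "\<bar>n\<bar> \<le> K" unfolding K_def by linarith
  have big: "\<bar>E\<bar> > K^2 + 2*K"
  proof -
    define d where "d = \<bar>D\<bar>"
    have d2: "d \<ge> 2" using B(2) d_def by auto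
    have Ed: "\<bar>E\<bar> = (d*d)*(d*d)" using E F d_def by (simp add: power2_eq_square abs_mult)
    have "d*d \<ge> 2*d" using d2 by (intro mult_right_mono) auto
    have dd4: "d*d \<ge> 4" using d2 \<open>d*d \<ge> 2*d\<close> by linarith
    have "(d*d)*(d*d) \<ge> 4*(d*d)" using dd4 by (intro mult_right_mono) auto
    moreover have "K^2 + 2*K = d*d + 4*d + 3" unfolding K_def d_def[symmetric]
      by (simp add: power2_eq_square algebra_simps)
    ultimately show ?thesis using Ed \<open>d*d \<ge> 2*d\<close> dd4 by linarith
  qed
  have "(E - m) dvd (E^2 - n)" using B(8) C by simp
  hence "n = m^2" using size_conclude[OF mK nK big] by blast
  thus "(e 0, e 1) \<in> {(n, n^2) | n. \<not> p dvd n}" using pm m_def n_def by auto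
next
  assume "(e 0, e 1) \<in> {(n, n^2) | n. \<not> p dvd n}"
  then obtain m where m: "e 0 = m" "e 1 = m^2" "\<not> p dvd m" by auto
  obtain t where t: "t \<ge> 1" "m^2 dvd p^t - 1" using euler_int[OF p m(3)] by blast
  define D where "D = p^t"
  define F where "F = D^2"
  define E where "E = F^2"
  define C where "C = E^2"
  have sq1: "SQ p D F" unfolding F_def using sq_fwd[of D p t] D_def by simp
  have sq2: "SQ p F E" unfolding E_def using sq_fwd[of F p "2*t"] D_def F_def
    by (simp add: power_mult power2_eq_square power_mult_distrib)
  have eE: "E = p^(t*2*2)" unfolding E_def F_def D_def by (simp only: power_mult)
  have sq3: "SQ p E C" unfolding C_def using sq_fwd[of E p "t*2*2"] eE by blast
  have r: "pdvd p 1 D" using pdvd_intro(1)[where x=1 and p=p and k=t] D_def by simp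
  have "D \<ge> 2" using pow_ge[OF p t(1)] D_def by simp
  hence T: "D \<notin> {-1,0,1}" by auto
  have dm: "m dvd D - 1" using t(2) D_def by (metis dvd_trans dvd_triv_left power2_eq_square)
  have dn: "m^2 dvd D - 1" using t(2) D_def by simp
  have de: "(E - m) dvd (C - m^2)"
  proof -
    have "C - m^2 = (E - m) * (E + m)" unfolding C_def by (simp add: power2_eq_square algebra_simps)
    thus ?thesis by simp
  qed
  define g where "g = e(2:=D, 3:=F, 4:=E, 5:=C, 6:=D-1, 7:=F-D, 8:=F-1, 9:=E-F, 10:=E-1, 11:=C-E,
     12:=E-m, 13:=C-m^2)"
  have "sat p g body" unfolding sat_body g_def using m sq1 sq2 sq3 r T dm dn de by simp
  moreover have "\<forall>j. j \<notin> set [2,3,4,5,6,7,8,9,10,11,12,13::nat] \<longrightarrow> g j = e j"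
    unfolding g_def by auto
  ultimately show "sat p e phi" unfolding phi_def sat_exs by blast
qed

theorem lemma4p11:
  shows "(\<forall>(p::int) (m::int) (n::int). prime p \<longrightarrow>
            ((n = m^2 \<and> \<not> p dvd m \<and> \<not> p dvd n) \<longleftrightarrow>
             (\<not> p dvd m \<and> \<not> p dvd n \<and>
              (\<exists>a \<in> {x. \<exists>h::nat. h \<ge> 1 \<and> (x = p^h \<or> x = - (p^h))}.
                  m dvd a^2 - 1 \<and> n dvd a^2 - 1 \<and> (a^8 - m) dvd (a^16 - n)))))
        \<and> unif_pe_definable2 (\<lambda>p. {(n, n^2) | n. \<not> p dvd n})"
proof
  show "\<forall>(p::int) (m::int) (n::int). prime p \<longrightarrow>
            ((n = m^2 \<and> \<not> p dvd m \<and> \<not> p dvd n) \<longleftrightarrow>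
             (\<not> p dvd m \<and> \<not> p dvd n \<and>
              (\<exists>a \<in> {x. \<exists>h::nat. h \<ge> 1 \<and> (x = p^h \<or> x = - (p^h))}.
                  m dvd a^2 - 1 \<and> n dvd a^2 - 1 \<and> (a^8 - m) dvd (a^16 - n))))"
    using part1 by blast
  show "unif_pe_definable2 (\<lambda>p. {(n, n^2) | n. \<not> p dvd n})"
    unfolding unif_pe_definable2_def using def_part by blast
qed

end
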